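(* Let $T_1$ and $T_2$ be two continuous transitive maps of a compact metric space $X$ which commute ($T_1\circ T_2=T_2\circ T_1$). Then $G_k(T_1)=G_k(T_2)$ for all $k\ge1$. In particular, if $T$ and $T^m$ (for some $m\ge2$) are both transitive, then $G_k(T)=G_k(T^m)$ for all $k\ge1$.
   Context: A continuous map $S:X\to X$ is transitive if some orbit $\{S^nx:n\ge0\}$ is dense in $X$. For such $S$: $G_0(S)$ is the set of $\lambda\in\mathbb{C}$ for which there exists a nonzero $h\in C(X)$ with $h\circ S=\lambda h$ (identified with constant functions); for $k\ge1$, $G_k(S)=\{h\in C(X): |h(x)|=1\ \forall x,\ (h\circ S)\overline h\in G_{k-1}(S)\}$. *)

theory Defs
  imports "HOL-Analysis.Analysis"
begin

definition self_map :: "'a::metric_space set \<Rightarrow> ('a \<Rightarrow> 'a) \<Rightarrow> bool" where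
  "self_map X S \<longleftrightarrow> continuous_on X S \<and> S ` X \<subseteq> X"

definition transitive_map :: "'a::metric_space set \<Rightarrow> ('a \<Rightarrow> 'a) \<Rightarrow> bool" where
  "transitive_map X S \<longleftrightarrow> (\<exists>x\<in>X. X \<subseteq> closure (range (\<lambda>n. (S ^^ n) x)))"

text \<open>C(X): continuous complex functions on X, represented canonically
  (extended by 0 outside X).\<close>
definition CX :: "'a::metric_space set \<Rightarrow> ('a \<Rightarrow> complex) set" where
  "CX X = {h. continuous_on X h \<and> (\<forall>x. x \<notin> X \<longrightarrow> h x = 0)}"

definition restrX :: "'a::metric_space set \<Rightarrow> ('a \<Rightarrow> complex) \<Rightarrow> ('a \<Rightarrow> complex)" where
  "restrX X f = (\<lambda>x. if x \<in> X then f x else 0)"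

text \<open>G_0(S): eigenvalues lambda, identified with constant functions on X;
  G_k(S) for k >= 1 as in the paper.\<close>
fun G :: "'a::metric_space set \<Rightarrow> nat \<Rightarrow> ('a \<Rightarrow> 'a) \<Rightarrow> ('a \<Rightarrow> complex) set" where
  "G X 0 S = {restrX X (\<lambda>_. c) | c. \<exists>h\<in>CX X. (\<exists>x\<in>X. h x \<noteq> 0) \<and>
                 (\<forall>x\<in>X. h (S x) = c * h x)}"
| "G X (Suc k) S = {h \<in> CX X. (\<forall>x\<in>X. cmod (h x) = 1) \<and>
                 restrX X (\<lambda>x. h (S x) * cnj (h x)) \<in> G X k S}"

end

theory Submission
  imports Defs
begin

definition Dm :: "'a::metric_space set \<Rightarrow> ('a \<Rightarrow> 'a) \<Rightarrow> ('a \<Rightarrow> complex) \<Rightarrow> ('a \<Rightarrow> complex)" where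
  "Dm X T h = restrX X (\<lambda>x. h (T x) * cnj (h x))"

lemma G_Suc_iff: "h \<in> G X (Suc k) S \<longleftrightarrow> h \<in> CX X \<and> (\<forall>x\<in>X. cmod (h x) = 1) \<and> Dm X S h \<in> G X k S"
  by (simp add: Dm_def)

lemma self_mapD: "self_map X T \<Longrightarrow> x \<in> X \<Longrightarrow> T x \<in> X"
  unfolding self_map_def by blast

lemma Dm_CX:
  assumes "self_map X T" "h \<in> CX X" shows "Dm X T h \<in> CX X"
proof -
  have c: "continuous_on X h" using assms(2) by (simp add: CX_def)
  have "continuous_on X T" "T ` X \<subseteq> X" using assms(1) by (auto simp: self_map_def)
  then have "continuous_on X (\<lambda>x. h (T x))" using c by (metis continuous_on_compose2)
  then have c2: "continuous_on X (\<lambda>x. h (T x) * cnj (h x))"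
    using c by (intro continuous_intros) auto
  have "continuous_on X (Dm X T h)"
    by (rule continuous_on_cong[THEN iffD1, OF refl _ c2]) (simp add: Dm_def restrX_def)
  then show ?thesis by (simp add: CX_def Dm_def restrX_def)
qed

lemma Dm_unit:
  assumes "self_map X T" "\<forall>x\<in>X. cmod (h x) = 1" shows "\<forall>x\<in>X. cmod (Dm X T h x) = 1"
  using assms self_mapD[OF assms(1)] by (simp add: Dm_def restrX_def norm_mult)

lemma Dm_comm:
  assumes "self_map X T1" "self_map X T2" "\<forall>x\<in>X. T1 (T2 x) = T2 (T1 x)"
  shows "Dm X T1 (Dm X T2 h) = Dm X T2 (Dm X T1 h)"
proof
  fix x show "Dm X T1 (Dm X T2 h) x = Dm X T2 (Dm X T1 h) x"
    using assms self_mapD[OF assms(1)] self_mapD[OF assms(2)]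
    by (simp add: Dm_def restrX_def mult_ac)
qed

lemma unit_mult: "cmod u = 1 \<Longrightarrow> v * cnj u = c \<Longrightarrow> v = c * u"
proof -
  assume a: "cmod u = 1" "v * cnj u = c"
  have "cnj u * u = 1" using a(1)
    using complex_norm_square[of u] by (simp add: mult.commute)
  then have "v = v * (cnj u * u)" by simp
  also have "\<dots> = c * u" using a(2) by (simp add: mult.assoc[symmetric])
  finally show ?thesis .
qed

lemma G0_E: "g \<in> G X 0 S \<Longrightarrow> \<exists>c. g = restrX X (\<lambda>_. c)"
  by auto

lemma G0_intro:
  assumes "u \<in> CX X" "\<forall>x\<in>X. cmod (u x) = 1" "X \<noteq> {}" "Dm X S u = restrX X (\<lambda>_. c)"
  shows "restrX X (\<lambda>_. c) \<in> G X 0 S"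
proof -
  have "\<forall>x\<in>X. u (S x) = c * u x"
  proof
    fix x assume x: "x \<in> X"
    have "u (S x) * cnj (u x) = c" using fun_cong[OF assms(4), of x] x by (simp add: Dm_def restrX_def)
    then show "u (S x) = c * u x" using unit_mult assms(2) x by blast
  qed
  moreover have "\<exists>x\<in>X. u x \<noteq> 0" using assms(2,3) by force
  ultimately show ?thesis using assms(1) by auto
qed

lemma inv_const:
  fixes g :: "'a::metric_space \<Rightarrow> complex"
  assumes "compact X" "self_map X S" "transitive_map X S" "continuous_on X g"
    "\<forall>x\<in>X. g (S x) = g x"
  shows "\<exists>c. \<forall>x\<in>X. g x = c"
proof -
  obtain x0 where x0: "x0 \<in> X" "X \<subseteq> closure (range (\<lambda>n. (S ^^ n) x0))"
    using assms(3) by (auto simp: transitive_map_def)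
  have orb: "(S ^^ n) x0 \<in> X" for n
    by (induction n) (auto simp: x0 self_mapD[OF assms(2)])
  have gv: "g ((S ^^ n) x0) = g x0" for n
    by (induction n) (auto simp: assms(5) orb)
  have cl: "closure (range (\<lambda>n. (S ^^ n) x0)) \<subseteq> X"
    using orb compact_imp_closed[OF assms(1)] by (intro closure_minimal) auto
  have "g ` closure (range (\<lambda>n. (S ^^ n) x0)) \<subseteq> {g x0}"
  proof (rule image_closure_subset)
    show "continuous_on (closure (range (\<lambda>n. (S ^^ n) x0))) g"
      using cl assms(4) continuous_on_subset by blast
    show "closed {g x0}" by (rule closed_singleton)
    show "g ` range (\<lambda>n. (S ^^ n) x0) \<subseteq> {g x0}" using gv by auto
  qed
  then show ?thesis using x0 by blast
qed

lemma main_incl: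
  assumes "compact X"
  shows "\<forall>T1 T2. self_map X T1 \<and> self_map X T2 \<and> transitive_map X T1 \<and> transitive_map X T2
            \<and> (\<forall>x\<in>X. T1 (T2 x) = T2 (T1 x)) \<longrightarrow> G X (Suc k) T1 \<subseteq> G X (Suc k) T2"
proof (induction k rule: less_induct)
  case (less k)
  show ?case
  proof (intro allI impI subsetI)
    fix T1 T2 h
    assume c: "self_map X T1 \<and> self_map X T2 \<and> transitive_map X T1 \<and> transitive_map X T2
            \<and> (\<forall>x\<in>X. T1 (T2 x) = T2 (T1 x))" and h: "h \<in> G X (Suc k) T1"
    then have s1: "self_map X T1" and s2: "self_map X T2" and t1: "transitive_map X T1"
      and t2: "transitive_map X T2" and cm: "\<forall>x\<in>X. T1 (T2 x) = T2 (T1 x)" by auto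
    have cm': "\<forall>x\<in>X. T2 (T1 x) = T1 (T2 x)" using cm by auto
    have ne: "X \<noteq> {}" using t1 by (auto simp: transitive_map_def)
    from h have hC: "h \<in> CX X" and hU: "\<forall>x\<in>X. cmod (h x) = 1" and hD: "Dm X T1 h \<in> G X k T1"
      using h unfolding G_Suc_iff by blast+
    define u where "u = Dm X T2 h"
    have uC: "u \<in> CX X" using Dm_CX[OF s2 hC] by (simp add: u_def)
    have uU: "\<forall>x\<in>X. cmod (u x) = 1" using Dm_unit[OF s2 hU] by (simp add: u_def)
    have comm: "Dm X T1 u = Dm X T2 (Dm X T1 h)" unfolding u_def by (rule Dm_comm[OF s1 s2 cm])
    have "u \<in> G X k T2"
    proof (cases k)
      case 0
      then obtain c where cD: "Dm X T1 h = restrX X (\<lambda>_. c)" using hD by auto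
      obtain x1 where x1: "x1 \<in> X" using ne by auto
      have "cmod c = 1" using Dm_unit[OF s1 hU] x1 fun_cong[OF cD, of x1] by (force simp: restrX_def)
      then have cc: "c * cnj c = 1" using complex_norm_square[of c] by simp
      have inv: "\<forall>x\<in>X. u (T1 x) = u x"
      proof
        fix x assume x: "x \<in> X"
        have e: "Dm X T1 u = Dm X T2 (restrX X (\<lambda>_. c))" using comm cD by simp
        have "Dm X T1 u x = 1" unfolding e using cc x self_mapD[OF s2 x] by (simp add: Dm_def restrX_def)
        then have "u (T1 x) * cnj (u x) = 1" using x by (simp add: Dm_def restrX_def)
        then have "u (T1 x) = 1 * u x" by (rule unit_mult[OF uU[rule_format, OF x]])
        then show "u (T1 x) = u x" by simp
      qed
      obtain d where d: "\<forall>x\<in>X. u x = d"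
        using inv_const[OF assms s1 t1 _ inv] uC by (auto simp: CX_def)
      have ud: "u = restrX X (\<lambda>_. d)"
        using d uC by (auto simp: CX_def restrX_def)
      have "restrX X (\<lambda>_. d) \<in> G X 0 T2"
        by (rule G0_intro[OF hC hU ne]) (use ud u_def in simp)
      then show ?thesis using ud 0 by simp
    next
      case (Suc j)
      have "Dm X T1 h \<in> G X (Suc j) T2" using less.IH[of j] Suc c hD by auto
      then have "Dm X T2 (Dm X T1 h) \<in> G X j T2" unfolding G_Suc_iff by blast
      then have A: "Dm X T1 u \<in> G X j T2" using comm by simp
      have "Dm X T1 u \<in> G X j T1"
      proof (cases j)
        case 0
        then obtain c where "Dm X T1 u = restrX X (\<lambda>_. c)" using A by auto
        then show ?thesis using G0_intro[OF uC uU ne] 0 by simp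
      next
        case (Suc i)
        then show ?thesis using less.IH[of i] \<open>k = Suc j\<close> s1 s2 t1 t2 cm' A by auto
      qed
      then have "u \<in> G X (Suc j) T1" using uC uU unfolding G_Suc_iff by blast
      then show ?thesis using less.IH[of j] Suc c by auto
    qed
    then show "h \<in> G X (Suc k) T2" using hC hU unfolding G_Suc_iff u_def by blast
  qed
qed

lemma self_map_pow: "self_map X T \<Longrightarrow> self_map X (T ^^ m)"
proof (induction m)
  case 0 then show ?case by (simp add: self_map_def continuous_on_id)
next
  case (Suc m)
  then have a: "continuous_on X (T ^^ m)" "(T ^^ m) ` X \<subseteq> X" by (auto simp: self_map_def)
  have b: "continuous_on X T" "T ` X \<subseteq> X" using Suc.prems by (auto simp: self_map_def)
  have "continuous_on X (T \<circ> (T ^^ m))"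
    using a b by (intro continuous_on_compose) (auto intro: continuous_on_subset)
  then show ?case using a b by (auto simp: self_map_def)
qed

theorem lemma2p2:
  fixes X :: "'a::metric_space set"
  assumes "compact X"
  shows "(\<forall>T1 T2. self_map X T1 \<and> self_map X T2 \<and> transitive_map X T1 \<and> transitive_map X T2
            \<and> (\<forall>x\<in>X. T1 (T2 x) = T2 (T1 x))
            \<longrightarrow> (\<forall>k\<ge>1. G X k T1 = G X k T2))
       \<and> (\<forall>T m. self_map X T \<and> m \<ge> 2 \<and> transitive_map X T \<and> transitive_map X (T ^^ m)
            \<longrightarrow> (\<forall>k\<ge>1. G X k T = G X k (T ^^ m)))"
proof -
  have P: "\<forall>T1 T2. self_map X T1 \<and> self_map X T2 \<and> transitive_map X T1 \<and> transitive_map X T2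
            \<and> (\<forall>x\<in>X. T1 (T2 x) = T2 (T1 x))
            \<longrightarrow> (\<forall>k\<ge>1. G X k T1 = G X k T2)"
  proof (intro allI, rule impI)
    fix T1 T2
    assume c: "self_map X T1 \<and> self_map X T2 \<and> transitive_map X T1 \<and> transitive_map X T2
            \<and> (\<forall>x\<in>X. T1 (T2 x) = T2 (T1 x))"
    have c': "self_map X T2 \<and> self_map X T1 \<and> transitive_map X T2 \<and> transitive_map X T1
            \<and> (\<forall>x\<in>X. T2 (T1 x) = T1 (T2 x))" using c by auto
    show "\<forall>k\<ge>1. G X k T1 = G X k T2"
    proof (intro allI impI)
      fix k :: nat assume k: "1 \<le> k"
      obtain j where j: "k = Suc j" using k by (cases k) auto
      have "G X (Suc j) T1 \<subseteq> G X (Suc j) T2" using main_incl[OF assms, of j] c by blast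
      moreover have "G X (Suc j) T2 \<subseteq> G X (Suc j) T1" using main_incl[OF assms, of j] c' by blast
      ultimately show "G X k T1 = G X k T2" using j by blast
    qed
  qed
  moreover have "\<forall>T m. self_map X T \<and> m \<ge> 2 \<and> transitive_map X T \<and> transitive_map X (T ^^ m)
            \<longrightarrow> (\<forall>k\<ge>1. G X k T = G X k (T ^^ m))"
  proof (intro allI, rule impI)
    fix T and m :: nat
    assume a: "self_map X T \<and> m \<ge> 2 \<and> transitive_map X T \<and> transitive_map X (T ^^ m)"
    have "\<forall>x\<in>X. T ((T ^^ m) x) = (T ^^ m) (T x)" by (simp add: funpow_swap1)
    then show "\<forall>k\<ge>1. G X k T = G X k (T ^^ m)"
      using P a self_map_pow[of X T m] by blast
  qed
  ultimately show ?thesis by blast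
qed

end
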